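(* Let $A,B\in\mathbb{R}^{n\times n}$ be real symmetric with normalizations $\widetilde A,\widetilde B$ satisfying $\mathrm{spec}(\widetilde A),\mathrm{spec}(\widetilde B)\subset[-1,1]$, and let $\eta>0$. Then there is a constant $C_T\le2$ such that for all $k\ge0$, \[ |\mathrm{tr}\,T_k(\widetilde A)-\mathrm{tr}\,T_k(\widetilde B)|\le n\,C_T\,k^2\,\|\widetilde A-\widetilde B\|_2, \] and for any $K\ge1$, \[ \|\phi_K(A)-\phi_K(B)\|_2\le\frac{n}{\|[s_0,\dots,s_{K-1}]\|_2}\Big(\sum_{k=0}^{K-1}e^{-2\eta k}C_T^2k^4\Big)^{1/2}\|\widetilde A-\widetilde B\|_2=\mathcal{O}\big(n\,\eta^{-5/2}\,\|\widetilde A-\widetilde B\|_2\big), \] where $s_k=s_k(A)$.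
   Context: For a real symmetric $M$, $\widetilde M=(M-mI)/r$ with $m=\tfrac12(\lambda_{\max}(M)+\lambda_{\min}(M))$, $r=(1+\varepsilon_{\mathrm{rel}})\tfrac12(\lambda_{\max}(M)-\lambda_{\min}(M))$, fixed $\varepsilon_{\mathrm{rel}}>0$. $T_k$ are Chebyshev polynomials of the first kind ($T_0=1$, $T_1(x)=x$, $T_{k+1}=2xT_k-T_{k-1}$). $s_k(M)=e^{-\eta k}\mathrm{tr}(T_k(\widetilde M))$ and $\phi_K(M)=[s_0(M),\dots,s_{K-1}(M)]/\|[s_0(M),\dots,s_{K-1}(M)]\|_2$. $\|\cdot\|_2$ denotes the spectral norm for matrices and Euclidean norm for vectors. *)

theory Defs
  imports "Jordan_Normal_Form.Matrix" "Jordan_Normal_Form.Char_Poly"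
begin

definition mtrace :: "real mat \<Rightarrow> real" where
  "mtrace M = (\<Sum>i<dim_row M. M $$ (i, i))"

definition real_sym :: "nat \<Rightarrow> real mat \<Rightarrow> bool" where
  "real_sym n M \<longleftrightarrow> M \<in> carrier_mat n n \<and> transpose_mat M = M"

definition spec :: "real mat \<Rightarrow> real set" where
  "spec M = {l. eigenvalue M l}"

definition lam_max :: "real mat \<Rightarrow> real" where
  "lam_max M = Max (spec M)"

definition lam_min :: "real mat \<Rightarrow> real" where
  "lam_min M = Min (spec M)"

definition normalize_mat :: "real \<Rightarrow> real mat \<Rightarrow> real mat" where
  "normalize_mat eps M =
     (let m = (lam_max M + lam_min M) / 2;
          r = (1 + eps) * ((lam_max M - lam_min M) / 2)
      in (1 / r) \<cdot>\<^sub>m (M - m \<cdot>\<^sub>m 1\<^sub>m (dim_row M)))"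

fun cheb_mat :: "nat \<Rightarrow> real mat \<Rightarrow> real mat" where
  "cheb_mat 0 M = 1\<^sub>m (dim_row M)"
| "cheb_mat (Suc 0) M = M"
| "cheb_mat (Suc (Suc k)) M = 2 \<cdot>\<^sub>m (M * cheb_mat (Suc k) M) - cheb_mat k M"

definition vnorm :: "real vec \<Rightarrow> real" where
  "vnorm v = sqrt (\<Sum>i<dim_vec v. (v $ i)\<^sup>2)"

definition spec_norm :: "real mat \<Rightarrow> real" where
  "spec_norm M = Sup (insert 0 {vnorm (M *\<^sub>v v) | v. v \<in> carrier_vec (dim_col M) \<and> vnorm v = 1})"

definition s_coef :: "real \<Rightarrow> real \<Rightarrow> real mat \<Rightarrow> nat \<Rightarrow> real" where
  "s_coef eta eps M k = exp (- eta * real k) * mtrace (cheb_mat k (normalize_mat eps M))"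

definition s_vec :: "real \<Rightarrow> real \<Rightarrow> nat \<Rightarrow> real mat \<Rightarrow> real vec" where
  "s_vec eta eps K M = vec K (\<lambda>k. s_coef eta eps M k)"

definition phi :: "real \<Rightarrow> real \<Rightarrow> nat \<Rightarrow> real mat \<Rightarrow> real vec" where
  "phi eta eps K M = (1 / vnorm (s_vec eta eps K M)) \<cdot>\<^sub>v s_vec eta eps K M"

end

theory Submission
  imports Defs
begin

declare col_mult[simp del]


lemma householder:
  fixes v :: "real vec"
  assumes v: "v \<in> carrier_vec n" and v1: "(\<Sum>k<n. v$k * v$k) = 1" and n: "n > 0"
  shows "\<exists>H. H \<in> carrier_mat n n \<and> transpose_mat H * H = 1\<^sub>m n \<and> col H 0 = v"
proof -
  define w where "w = (\<lambda>k. v$k - (if k = 0 then 1 else 0::real))"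
  define S where "S = (\<Sum>k<n. w k * w k)"
  have wk: "w k * w k = v$k * v$k - 2 * (if k = 0 then v$0 else 0) + (if k = 0 then 1 else 0)" for k
    by (auto simp: w_def algebra_simps)
  have S: "S = 2 - 2 * v$0"
    unfolding S_def wk using n
    by (simp add: sum.distrib sum_subtractf v1 sum_distrib_left[symmetric])
  show ?thesis
  proof (cases "S = 0")
    case True
    have "w k * w k = 0" if "k < n" for k
    proof -
      have "(\<Sum>k<n. w k * w k) = 0" using True S_def by simp
      then show ?thesis using sum_nonneg_eq_0_iff[of "{..<n}" "\<lambda>k. w k * w k"] that by auto
    qed
    then have "v$k = (if k = 0 then 1 else 0)" if "k < n" for k using that by (auto simp: w_def)
    then have "col (1\<^sub>m n) 0 = v" using v n by (intro eq_vecI) auto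
    then show ?thesis by (intro exI[of _ "1\<^sub>m n"]) auto
  next
    case False
    define c where "c = 2 / S"
    have cS: "c * S = 2" using False by (simp add: c_def)
    define H where "H = mat n n (\<lambda>(i,j). (if i = j then 1 else 0) - c * w i * w j)"
    have H: "H \<in> carrier_mat n n" by (simp add: H_def)
    have "transpose_mat H * H = 1\<^sub>m n"
    proof (rule eq_matI)
      fix i j assume i: "i < dim_row (1\<^sub>m n)" and j: "j < dim_col (1\<^sub>m n)"
      have e: "H$$(k,i) * H$$(k,j) = (if k = i then (if i = j then 1 else 0) else 0)
         - (if k = i then c * w i * w j else 0) - (if k = j then c * w i * w j else 0)
         + (c * c * w i * w j) * (w k * w k)" if "k < n" for k
        using i j that by (auto simp: H_def algebra_simps)
      have "(transpose_mat H * H) $$ (i,j) = (\<Sum>k<n. H$$(k,i) * H$$(k,j))"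
        using i j H by (simp add: scalar_prod_def atLeast0LessThan)
      also have "\<dots> = (\<Sum>k<n. (if k = i then (if i = j then 1 else 0) else 0)
         - (if k = i then c * w i * w j else 0) - (if k = j then c * w i * w j else 0)
         + (c * c * w i * w j) * (w k * w k))"
        by (rule sum.cong) (auto simp: e)
      also have "\<dots> = (if i = j then 1 else 0) - 2 * c * w i * w j + (c * c * w i * w j) * S"
        using i j unfolding S_def
        by (simp add: sum.distrib sum_subtractf sum_distrib_left[symmetric])
      also have "\<dots> = (if i = j then 1 else 0)"
        using cS by (simp add: algebra_simps)
      finally show "(transpose_mat H * H) $$ (i,j) = 1\<^sub>m n $$ (i,j)" using i j by simp
    qed (use H in auto)
    moreover have "col H 0 = v"
    proof (rule eq_vecI)
      have w0: "S = - 2 * w 0" using S by (simp add: w_def)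
      then have cw: "c * w 0 = -1" using False by (simp add: c_def)
      fix i assume "i < dim_vec v"
      then have i: "i < n" using v by simp
      have "col H 0 $ i = (if i = 0 then 1 else 0) - (c * w 0) * w i"
        using i n by (simp add: H_def)
      also have "\<dots> = v $ i" unfolding cw by (simp add: w_def)
      finally show "col H 0 $ i = v $ i" .
    qed (use v H in auto)
    ultimately show ?thesis using H by blast
  qed
qed

lemma sym_real_eigen:
  fixes A :: "real mat"
  assumes A: "A \<in> carrier_mat n n" and sym: "transpose_mat A = A" and n: "n > 0"
  shows "\<exists>l. eigenvalue A l"
proof -
  define Ac where "Ac = map_mat complex_of_real A"
  have Ac: "Ac \<in> carrier_mat n n" using A by (simp add: Ac_def)
  obtain as where cp: "char_poly Ac = (\<Prod>a\<leftarrow>as. [:- a, 1:])" and len: "length as = n"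
    using char_poly_factorized[OF Ac] by blast
  then obtain a rest where as: "as = a # rest" using n by (cases as) auto
  have "poly (char_poly Ac) a = 0" unfolding cp as by simp
  then have "eigenvalue Ac a" using eigenvalue_root_char_poly[OF Ac] by simp
  then obtain v where ev: "eigenvector Ac v a" unfolding eigenvalue_def by blast
  then have v: "v \<in> carrier_vec n" and v0: "v \<noteq> 0\<^sub>v n" and Av: "Ac *\<^sub>v v = a \<cdot>\<^sub>v v"
    using Ac unfolding eigenvector_def by auto
  define s where "s = (\<Sum>i<n. \<Sum>j<n. cnj (v$i) * Ac$$(i,j) * v$j)"
  define N where "N = (\<Sum>i<n. (Re (v$i))^2 + (Im (v$i))^2)"
  have row: "(\<Sum>j<n. Ac$$(i,j) * v$j) = a * v$i" if "i < n" for i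
  proof -
    have "(Ac *\<^sub>v v) $ i = a * v$i" using Av that v by simp
    then show ?thesis using that Ac v by (simp add: scalar_prod_def atLeast0LessThan)
  qed
  have "s = (\<Sum>i<n. cnj (v$i) * (\<Sum>j<n. Ac$$(i,j) * v$j))"
    unfolding s_def by (simp add: sum_distrib_left mult.assoc)
  also have "\<dots> = (\<Sum>i<n. a * (cnj (v$i) * v$i))" by (rule sum.cong) (auto simp: row)
  also have "\<dots> = a * complex_of_real N"
    unfolding N_def by (simp add: sum_distrib_left complex_mult_cnj mult.commute)
  finally have s1: "s = a * complex_of_real N" .
  have "cnj s = (\<Sum>i<n. \<Sum>j<n. v$i * Ac$$(i,j) * cnj (v$j))"
    unfolding s_def Ac_def using A by (simp add: cnj_sum)
  also have "\<dots> = (\<Sum>j<n. \<Sum>i<n. v$i * Ac$$(i,j) * cnj (v$j))" by (rule sum.swap)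
  also have "\<dots> = s" unfolding s_def
  proof (intro sum.cong refl)
    fix i j assume "i \<in> {..<n}" "j \<in> {..<n}"
    then have "A$$(j,i) = A$$(i,j)" using sym A
      by (metis carrier_matD(1) carrier_matD(2) index_transpose_mat(1) lessThan_iff)
    then show "v$j * Ac$$(j,i) * cnj (v$i) = cnj (v$i) * Ac$$(i,j) * v$j"
      using \<open>i \<in> _\<close> \<open>j \<in> _\<close> A by (simp add: Ac_def)
  qed
  finally have "Im s = 0" by (metis Reals_cnj_iff complex_is_Real_iff)
  moreover have "N > 0"
  proof -
    obtain i where i: "i < n" "v$i \<noteq> 0" using v v0 by (metis eq_vecI carrier_vecD index_zero_vec)
    have "(Re (v$i))^2 + (Im (v$i))^2 \<le> N" unfolding N_def
      by (rule member_le_sum) (use i in auto)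
    moreover have "(Re (v$i))^2 + (Im (v$i))^2 > 0"
    proof -
      have "(cmod (v$i))^2 > 0" using i by simp
      then show ?thesis using cmod_power2[of "v$i"] by simp
    qed
    ultimately show ?thesis by linarith
  qed
  ultimately have "Im a = 0" using s1 by simp
  then have ar: "a = complex_of_real (Re a)" by (simp add: complex_eq_iff)
  have "char_poly Ac = map_poly complex_of_real (char_poly A)"
    unfolding Ac_def by (rule of_real_hom.char_poly_hom[OF A])
  then have "poly (map_poly complex_of_real (char_poly A)) (complex_of_real (Re a)) = 0"
    using \<open>poly (char_poly Ac) a = 0\<close> ar by simp
  then have "poly (char_poly A) (Re a) = 0" by simp
  then show ?thesis using eigenvalue_root_char_poly[OF A] by blast
qed


definition dmat :: "nat \<Rightarrow> (nat \<Rightarrow> real) \<Rightarrow> real mat" where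
  "dmat n d = mat n n (\<lambda>(i,j). if i = j then d i else 0)"

lemma dmat_carrier[simp]: "dmat n d \<in> carrier_mat n n" by (simp add: dmat_def)
lemma dmat_dim[simp]: "dim_row (dmat n d) = n" "dim_col (dmat n d) = n" by (simp_all add: dmat_def)

lemma spectral:
  fixes A :: "real mat"
  assumes "A \<in> carrier_mat n n" "transpose_mat A = A"
  shows "\<exists>Q d. Q \<in> carrier_mat n n \<and> transpose_mat Q * Q = 1\<^sub>m n \<and> A * Q = Q * dmat n d"
  using assms
proof (induction n arbitrary: A)
  case 0
  then show ?case by (intro exI[of _ "1\<^sub>m 0"] exI[of _ "\<lambda>_. 0"]) (auto intro!: eq_matI simp: dmat_def)
next
  case (Suc m)
  let ?N = "Suc m"
  have A: "A \<in> carrier_mat ?N ?N" and symA: "transpose_mat A = A" using Suc.prems by auto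
  obtain l where "eigenvalue A l" using sym_real_eigen[OF A symA] by auto
  then obtain u where "eigenvector A u l" unfolding eigenvalue_def by blast
  then have u: "u \<in> carrier_vec ?N" and u0: "u \<noteq> 0\<^sub>v ?N" and Au: "A *\<^sub>v u = l \<cdot>\<^sub>v u"
    using A unfolding eigenvector_def by auto
  have uu: "u \<bullet> u > 0"
  proof -
    obtain i where i: "i < ?N" "u$i \<noteq> 0" using u u0 by (metis eq_vecI carrier_vecD index_zero_vec)
    have "u$i * u$i \<le> (\<Sum>k\<in>{0..<?N}. u$k * u$k)"
      by (rule member_le_sum) (use i in auto)
    moreover have "u$i * u$i > 0" using i by (auto simp: zero_less_mult_iff linorder_neq_iff)
    ultimately show ?thesis using u by (simp add: scalar_prod_def)
  qed
  define v where "v = (1 / sqrt (u \<bullet> u)) \<cdot>\<^sub>v u"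
  have v: "v \<in> carrier_vec ?N" using u by (simp add: v_def)
  have "v \<bullet> v = (1 / sqrt (u \<bullet> u)) * (1 / sqrt (u \<bullet> u)) * (u \<bullet> u)"
    using u by (simp add: v_def)
  also have "\<dots> = 1" using uu by (simp add: field_simps)
  finally have vv: "v \<bullet> v = 1" .
  then have vv': "(\<Sum>k<?N. v$k * v$k) = 1" using v by (simp add: scalar_prod_def atLeast0LessThan)
  have Av: "A *\<^sub>v v = l \<cdot>\<^sub>v v" unfolding v_def using A u Au
    by (simp add: mult_mat_vec smult_smult_assoc mult.commute)
  obtain H where H: "H \<in> carrier_mat ?N ?N" and HH: "transpose_mat H * H = 1\<^sub>m ?N"
    and Hv: "col H 0 = v"
    using householder[OF v vv'] by auto
  have HT: "transpose_mat H \<in> carrier_mat ?N ?N" using H by simp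
  have HH2: "H * transpose_mat H = 1\<^sub>m ?N" using mat_mult_left_right_inverse[OF HT H HH] .
  define A' where "A' = transpose_mat H * (A * H)"
  have A': "A' \<in> carrier_mat ?N ?N" using A H by (simp add: A'_def)
  have symA': "transpose_mat A' = A'"
    unfolding A'_def using A H symA
    by (simp add: transpose_mult[of _ ?N ?N _ ?N])
  have A'col: "A' $$ (i, 0) = (if i = 0 then l else 0)" if i: "i < ?N" for i
  proof -
    have "A' $$ (i, 0) = row (transpose_mat H) i \<bullet> col (A * H) 0"
      using i A H by (simp add: A'_def)
    also have "\<dots> = col H i \<bullet> (l \<cdot>\<^sub>v col H 0)" using i A H Av Hv by simp
    also have "\<dots> = l * (col H i \<bullet> col H 0)" using i H by simp
    also have "col H i \<bullet> col H 0 = (transpose_mat H * H) $$ (i, 0)" using i H by simp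
    also have "\<dots> = (if i = 0 then 1 else 0)" using i by (simp add: HH)
    finally show ?thesis by simp
  qed
  have A'row: "A' $$ (0, j) = (if j = 0 then l else 0)" if j: "j < ?N" for j
  proof -
    have "A' $$ (0, j) = transpose_mat A' $$ (j, 0)" using j A' by simp
    then show ?thesis using A'col[OF j] symA' by simp
  qed
  define A4 where "A4 = mat m m (\<lambda>(i,j). A' $$ (Suc i, Suc j))"
  have A4: "A4 \<in> carrier_mat m m" by (simp add: A4_def)
  have symA4: "transpose_mat A4 = A4"
  proof (rule eq_matI)
    fix i j assume "i < dim_row A4" "j < dim_col A4"
    then have ij: "i < m" "j < m" by (auto simp: A4_def)
    have "A' $$ (Suc j, Suc i) = transpose_mat A' $$ (Suc i, Suc j)" using ij A' by simp
    then show "transpose_mat A4 $$ (i, j) = A4 $$ (i, j)" using ij symA' by (simp add: A4_def)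
  qed (auto simp: A4_def)
  define L where "L = mat 1 1 (\<lambda>_. l)"
  have L: "L \<in> carrier_mat 1 1" by (simp add: L_def)
  have A'blk: "A' = four_block_mat L (0\<^sub>m 1 m) (0\<^sub>m m 1) A4"
  proof (rule eq_matI)
    fix i j assume ij: "i < dim_row (four_block_mat L (0\<^sub>m 1 m) (0\<^sub>m m 1) A4)"
      "j < dim_col (four_block_mat L (0\<^sub>m 1 m) (0\<^sub>m m 1) A4)"
    then have i: "i < ?N" and j: "j < ?N" using L A4 by auto
    show "A' $$ (i, j) = four_block_mat L (0\<^sub>m 1 m) (0\<^sub>m m 1) A4 $$ (i, j)"
    proof (cases "i = 0")
      case True then show ?thesis using j A'row[OF j] L A4 by (auto simp: L_def)
    next
      case False
      then obtain i' where i': "i = Suc i'" by (cases i) auto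
      show ?thesis
      proof (cases "j = 0")
        case True then show ?thesis using i A'col[OF i] L A4 i' by auto
      next
        case False
        then obtain j' where j': "j = Suc j'" by (cases j) auto
        then show ?thesis using i j i' L A4 by (auto simp: A4_def)
      qed
    qed
  qed (use A' L A4 in auto)
  obtain Q4 d4 where Q4: "Q4 \<in> carrier_mat m m" and Q4Q4: "transpose_mat Q4 * Q4 = 1\<^sub>m m"
    and AQ4: "A4 * Q4 = Q4 * dmat m d4"
    using Suc.IH[OF A4 symA4] by blast
  have c1: "(1\<^sub>m 1 :: real mat) \<in> carrier_mat 1 1" "(0\<^sub>m 1 m :: real mat) \<in> carrier_mat 1 m"
    "(0\<^sub>m m 1 :: real mat) \<in> carrier_mat m 1" by auto
  have Q4T: "transpose_mat Q4 \<in> carrier_mat m m" using Q4 by simp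
  define E where "E = four_block_mat (1\<^sub>m 1) (0\<^sub>m 1 m) (0\<^sub>m m 1) Q4"
  have E: "E \<in> carrier_mat ?N ?N" proof -
    have "(1\<^sub>m 1 :: real mat) \<in> carrier_mat 1 1" by simp
    from four_block_carrier_mat[OF this Q4] show ?thesis by (simp add: E_def)
  qed
  define d where "d = (\<lambda>i. if i = 0 then l else d4 (i - 1))"
  have Dblk: "dmat ?N d = four_block_mat L (0\<^sub>m 1 m) (0\<^sub>m m 1) (dmat m d4)"
    by (rule eq_matI) (auto simp: dmat_def d_def L_def)
  define Q where "Q = H * E"
  have Q: "Q \<in> carrier_mat ?N ?N" using H E by (simp add: Q_def)
  have ETE: "transpose_mat E * E = 1\<^sub>m ?N"
  proof -
    have ET: "transpose_mat E = four_block_mat (1\<^sub>m 1) (0\<^sub>m 1 m) (0\<^sub>m m 1) (transpose_mat Q4)"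
      unfolding E_def using transpose_four_block_mat[OF c1 Q4] by simp
    have "transpose_mat E * E = four_block_mat (1\<^sub>m 1 * 1\<^sub>m 1 + 0\<^sub>m 1 m * 0\<^sub>m m 1)
       (1\<^sub>m 1 * 0\<^sub>m 1 m + 0\<^sub>m 1 m * Q4) (0\<^sub>m m 1 * 1\<^sub>m 1 + transpose_mat Q4 * 0\<^sub>m m 1)
       (0\<^sub>m m 1 * 0\<^sub>m 1 m + transpose_mat Q4 * Q4)"
      unfolding ET unfolding E_def by (rule mult_four_block_mat[OF c1 Q4T c1 Q4])
    also have "\<dots> = four_block_mat (1\<^sub>m 1) (0\<^sub>m 1 m) (0\<^sub>m m 1) (1\<^sub>m m)"
      using Q4 Q4Q4 by simp
    finally show ?thesis by simp
  qed
  have QQ: "transpose_mat Q * Q = 1\<^sub>m ?N"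
  proof -
    have ETc: "transpose_mat E \<in> carrier_mat ?N ?N" using E by simp
    have "transpose_mat Q = transpose_mat E * transpose_mat H"
      unfolding Q_def by (rule transpose_mult[OF H E])
    then have "transpose_mat Q * Q = (transpose_mat E * transpose_mat H) * (H * E)"
      by (simp add: Q_def)
    also have "\<dots> = transpose_mat E * (transpose_mat H * (H * E))"
      by (rule assoc_mult_mat[OF ETc HT mult_carrier_mat[OF H E]])
    also have "transpose_mat H * (H * E) = (transpose_mat H * H) * E"
      by (rule assoc_mult_mat[OF HT H E, symmetric])
    also have "\<dots> = E" using E by (simp add: HH)
    also have "transpose_mat E * E = 1\<^sub>m ?N" by (rule ETE)
    finally show ?thesis .
  qed
  have AH: "A * H = H * A'"
  proof -
    have "H * A' = (H * transpose_mat H) * (A * H)" unfolding A'_def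
      by (rule assoc_mult_mat[OF H HT mult_carrier_mat[OF A H], symmetric])
    also have "\<dots> = A * H" using HH2 A H by simp
    finally show ?thesis by simp
  qed
  have A'E: "A' * E = four_block_mat L (0\<^sub>m 1 m) (0\<^sub>m m 1) (A4 * Q4)"
    unfolding A'blk E_def using L A4 Q4
    by (subst mult_four_block_mat[OF L c1(2,3) A4 c1 Q4]) auto
  have ED: "E * dmat ?N d = four_block_mat L (0\<^sub>m 1 m) (0\<^sub>m m 1) (Q4 * dmat m d4)"
    unfolding Dblk E_def using L Q4
    by (subst mult_four_block_mat[OF c1 Q4 L c1(2,3) dmat_carrier]) auto
  have "A * Q = H * (A' * E)" unfolding Q_def
    using A H E A' by (simp flip: assoc_mult_mat[of A ?N ?N H ?N E ?N] add: AH)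
  also have "\<dots> = H * (E * dmat ?N d)" unfolding A'E ED AQ4 ..
  also have "\<dots> = Q * dmat ?N d" unfolding Q_def
    by (rule assoc_mult_mat[OF H E dmat_carrier, symmetric])
  finally show ?case using Q QQ by blast
qed

fun cheb :: "nat \<Rightarrow> real \<Rightarrow> real" where
  "cheb 0 x = 1"
| "cheb (Suc 0) x = x"
| "cheb (Suc (Suc k)) x = 2 * x * cheb (Suc k) x - cheb k x"

lemma cheb_cos: "cheb k (cos t) = cos (real k * t)"
proof (induction k rule: less_induct)
  case (less k)
  show ?case
  proof (cases k)
    case (Suc j)
    show ?thesis
    proof (cases j)
      case (Suc k')
      then have k: "k = Suc (Suc k')" using \<open>k = Suc j\<close> by simp
      have IH1: "cheb (Suc k') (cos t) = cos (real (Suc k') * t)" using less k by simp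
      have IH0: "cheb k' (cos t) = cos (real k' * t)" using less k by simp
  have "cos (real (Suc (Suc k')) * t) = cos (real (Suc k') * t + t)"
    by (simp add: algebra_simps)
  moreover have "cos (real k' * t) = cos (real (Suc k') * t - t)"
    by (simp add: algebra_simps)
  ultimately have "cos (real (Suc (Suc k')) * t) + cos (real k' * t) = 2 * cos t * cos (real (Suc k') * t)"
    by (simp add: cos_add cos_diff)
  then show ?thesis using IH1 IH0 k by simp
    qed (use Suc in simp)
  qed simp
qed

lemma sin_mult_le: "\<bar>sin (real k * u)\<bar> \<le> real k * \<bar>sin u\<bar>"
proof (induction k)
  case 0 then show ?case by simp
next
  case (Suc k)
  have "real (Suc k) * u = real k * u + u" by (simp add: algebra_simps)
  then have "sin (real (Suc k) * u) = sin (real k * u) * cos u + cos (real k * u) * sin u"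
    by (simp add: sin_add)
  also have "\<bar>\<dots>\<bar> \<le> \<bar>sin (real k * u)\<bar> * \<bar>cos u\<bar> + \<bar>cos (real k * u)\<bar> * \<bar>sin u\<bar>"
    by (metis abs_mult abs_triangle_ineq)
  also have "\<dots> \<le> \<bar>sin (real k * u)\<bar> + \<bar>sin u\<bar>"
    by (intro add_mono mult_left_le mult_left_le_one_le) auto
  also have "\<dots> \<le> real (Suc k) * \<bar>sin u\<bar>" using Suc by (simp add: algebra_simps)
  finally show ?case .
qed

lemma cheb_lip:
  assumes "a \<in> {-1..1}" "b \<in> {-1..1}"
  shows "\<bar>cheb k a - cheb k b\<bar> \<le> (real k)^2 * \<bar>a - b\<bar>"
proof -
  define \<alpha> where "\<alpha> = arccos a"
  define \<beta> where "\<beta> = arccos b"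
  have a: "a = cos \<alpha>" and b: "b = cos \<beta>" using assms by (auto simp: \<alpha>_def \<beta>_def cos_arccos)
  define u where "u = (\<alpha> + \<beta>) / 2"
  define v where "v = (\<beta> - \<alpha>) / 2"
  have "cheb k a - cheb k b = cos (real k * \<alpha>) - cos (real k * \<beta>)" by (simp add: a b cheb_cos)
  also have "\<dots> = 2 * sin (real k * u) * sin (real k * v)"
    by (simp add: cos_diff_cos u_def v_def algebra_simps add_divide_distrib diff_divide_distrib)
  finally have 1: "\<bar>cheb k a - cheb k b\<bar> = 2 * \<bar>sin (real k * u)\<bar> * \<bar>sin (real k * v)\<bar>"
    by (simp add: abs_mult)
  have "a - b = 2 * sin u * sin v"
    by (simp add: a b cos_diff_cos u_def v_def)
  then have 2: "\<bar>a - b\<bar> = 2 * \<bar>sin u\<bar> * \<bar>sin v\<bar>" by (simp add: abs_mult)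
  have "2 * \<bar>sin (real k * u)\<bar> * \<bar>sin (real k * v)\<bar> \<le> 2 * (real k * \<bar>sin u\<bar>) * (real k * \<bar>sin v\<bar>)"
    by (intro mult_mono mult_left_mono sin_mult_le) auto
  then show ?thesis unfolding 1 2 by (simp add: power2_eq_square algebra_simps)
qed





lemma mtrace_comm:
  fixes X Y :: "real mat"
  assumes X: "X \<in> carrier_mat n m" and Y: "Y \<in> carrier_mat m n"
  shows "mtrace (X * Y) = mtrace (Y * X)"
proof -
  have "mtrace (X * Y) = (\<Sum>i<n. \<Sum>k<m. X$$(i,k) * Y$$(k,i))"
    unfolding mtrace_def using X Y by (simp add: scalar_prod_def atLeast0LessThan)
  also have "\<dots> = (\<Sum>k<m. \<Sum>i<n. Y$$(k,i) * X$$(i,k))"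
    by (subst sum.swap) (simp add: mult.commute)
  also have "\<dots> = mtrace (Y * X)"
    unfolding mtrace_def using X Y by (simp add: scalar_prod_def atLeast0LessThan)
  finally show ?thesis .
qed

lemma orth_right:
  fixes Q :: "real mat"
  assumes Q: "Q \<in> carrier_mat n n" and QQ: "transpose_mat Q * Q = 1\<^sub>m n"
  shows "Q * transpose_mat Q = 1\<^sub>m n"
  using mat_mult_left_right_inverse[OF _ Q QQ] Q by simp

lemma orth_col_sprod:
  fixes Q :: "real mat"
  assumes Q: "Q \<in> carrier_mat n n" and QQ: "transpose_mat Q * Q = 1\<^sub>m n" and i: "i < n" and j: "j < n"
  shows "col Q i \<bullet> col Q j = (if i = j then 1 else 0)"
proof -
  have "col Q i \<bullet> col Q j = (transpose_mat Q * Q) $$ (i, j)" using Q i j by simp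
  then show ?thesis using QQ i j by simp
qed

lemma parseval:
  fixes Q :: "real mat"
  assumes Q: "Q \<in> carrier_mat n n" and QQ: "transpose_mat Q * Q = 1\<^sub>m n" and z: "z \<in> carrier_vec n"
  shows "(\<Sum>i<n. (col Q i \<bullet> z)^2) = z \<bullet> z"
proof -
  have QT: "transpose_mat Q \<in> carrier_mat n n" using Q by simp
  have QQ2: "Q * transpose_mat Q = 1\<^sub>m n" by (rule orth_right[OF Q QQ])
  define y where "y = transpose_mat Q *\<^sub>v z"
  have y: "y \<in> carrier_vec n" using QT z by (simp add: y_def)
  have yi: "y $ i = col Q i \<bullet> z" if "i < n" for i using that Q by (simp add: y_def)
  have "(\<Sum>i<n. (col Q i \<bullet> z)^2) = y \<bullet> y"
    using y by (simp add: scalar_prod_def atLeast0LessThan yi power2_eq_square)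
  also have "\<dots> = (transpose_mat Q *\<^sub>v z) \<bullet> y" by (simp add: y_def)
  also have "\<dots> = z \<bullet> (Q *\<^sub>v y)" by (rule transpose_vec_mult_scalar[OF Q y z])
  also have "Q *\<^sub>v y = (Q * transpose_mat Q) *\<^sub>v z"
    unfolding y_def by (rule assoc_mult_mat_vec[OF Q QT z, symmetric])
  also have "\<dots> = z" using QQ2 z by simp
  finally show ?thesis .
qed

lemma trace_orth:
  fixes Q M :: "real mat"
  assumes Q: "Q \<in> carrier_mat n n" and QQ: "transpose_mat Q * Q = 1\<^sub>m n" and M: "M \<in> carrier_mat n n"
  shows "mtrace M = (\<Sum>i<n. col Q i \<bullet> (M *\<^sub>v col Q i))"
proof -
  have QT: "transpose_mat Q \<in> carrier_mat n n" using Q by simp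
  have QQ2: "Q * transpose_mat Q = 1\<^sub>m n" by (rule orth_right[OF Q QQ])
  have MQ: "M * Q \<in> carrier_mat n n" using M Q by simp
  have "mtrace M = mtrace (M * (Q * transpose_mat Q))" using QQ2 M by simp
  also have "\<dots> = mtrace ((M * Q) * transpose_mat Q)" using M Q QT by simp
  also have "\<dots> = mtrace (transpose_mat Q * (M * Q))" by (rule mtrace_comm[OF MQ QT])
  also have "\<dots> = (\<Sum>i<n. col Q i \<bullet> (M *\<^sub>v col Q i))"
    unfolding mtrace_def using Q M QT by simp
  finally show ?thesis .
qed

lemma spectral_cols:
  fixes A Q :: "real mat"
  assumes A: "A \<in> carrier_mat n n" and Q: "Q \<in> carrier_mat n n" and AQ: "A * Q = Q * dmat n d" and i: "i < n"
  shows "A *\<^sub>v col Q i = d i \<cdot>\<^sub>v col Q i"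
proof -
  have "A *\<^sub>v col Q i = col (A * Q) i" using A Q i by simp
  also have "\<dots> = col (Q * dmat n d) i" by (simp add: AQ)
  also have "\<dots> = d i \<cdot>\<^sub>v col Q i"
  proof (rule eq_vecI)
    fix j assume "j < dim_vec (d i \<cdot>\<^sub>v col Q i)"
    then have j: "j < n" using Q by simp
    have "col (Q * dmat n d) i $ j = (\<Sum>k\<in>{0..<n}. Q$$(j,k) * (if k = i then d k else 0))"
      using Q i j by (simp add: scalar_prod_def dmat_def)
    also have "\<dots> = (\<Sum>k\<in>{0..<n}. if k = i then Q$$(j,i) * d i else 0)"
      by (rule sum.cong) auto
    also have "\<dots> = Q$$(j,i) * d i" using i by simp
    finally show "col (Q * dmat n d) i $ j = (d i \<cdot>\<^sub>v col Q i) $ j" using Q i j by simp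
  qed (use Q i in auto)
  finally show ?thesis .
qed

lemma cheb_mat_carrier: "X \<in> carrier_mat n n \<Longrightarrow> cheb_mat k X \<in> carrier_mat n n"
proof (induction k rule: less_induct)
  case (less k)
  show ?case
  proof (cases k)
    case 0 then show ?thesis using less.prems by simp
  next
    case (Suc j)
    then show ?thesis
    proof (cases j)
      case 0 then show ?thesis using Suc less.prems by simp
    next
      case (Suc k')
      then have "cheb_mat (Suc k') X \<in> carrier_mat n n" "cheb_mat k' X \<in> carrier_mat n n"
        using less \<open>k = Suc j\<close> by auto
      then show ?thesis using Suc \<open>k = Suc j\<close> less.prems
        by (simp add: minus_carrier_mat)
    qed
  qed
qed

lemma smult_mat_vec:
  fixes A :: "real mat"
  assumes A: "A \<in> carrier_mat nr nc" and v: "v \<in> carrier_vec nc"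
  shows "(k \<cdot>\<^sub>m A) *\<^sub>v v = k \<cdot>\<^sub>v (A *\<^sub>v v)"
proof (rule eq_vecI)
  fix i assume "i < dim_vec (k \<cdot>\<^sub>v (A *\<^sub>v v))"
  then have i: "i < nr" using A by simp
  have "row (k \<cdot>\<^sub>m A) i = k \<cdot>\<^sub>v row A i" using i A by (intro eq_vecI) auto
  then show "((k \<cdot>\<^sub>m A) *\<^sub>v v) $ i = (k \<cdot>\<^sub>v (A *\<^sub>v v)) $ i"
    using i A v by simp
qed (use A in simp)

lemma cheb_mat_eigen:
  fixes X :: "real mat"
  assumes X: "X \<in> carrier_mat n n" and x: "x \<in> carrier_vec n" and Xx: "X *\<^sub>v x = l \<cdot>\<^sub>v x"
  shows "cheb_mat k X *\<^sub>v x = cheb k l \<cdot>\<^sub>v x"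
proof (induction k rule: less_induct)
  case (less k)
  show ?case
  proof (cases k)
    case 0 then show ?thesis using X x by simp
  next
    case (Suc j)
    then show ?thesis
    proof (cases j)
      case 0 then show ?thesis using Suc X x Xx by simp
    next
      case (Suc k')
      have k: "k = Suc (Suc k')" using Suc \<open>k = Suc j\<close> by simp
      have I1: "cheb_mat (Suc k') X *\<^sub>v x = cheb (Suc k') l \<cdot>\<^sub>v x" using less k by simp
      have I0: "cheb_mat k' X *\<^sub>v x = cheb k' l \<cdot>\<^sub>v x" using less k by simp
      have C1: "cheb_mat (Suc k') X \<in> carrier_mat n n" using cheb_mat_carrier[OF X] .
      have C0: "cheb_mat k' X \<in> carrier_mat n n" using cheb_mat_carrier[OF X] .
      have XC: "X * cheb_mat (Suc k') X \<in> carrier_mat n n" using X C1 by simp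
      have "cheb_mat k X *\<^sub>v x = (2 \<cdot>\<^sub>m (X * cheb_mat (Suc k') X)) *\<^sub>v x - cheb_mat k' X *\<^sub>v x"
        unfolding k using minus_mult_distrib_mat_vec[OF smult_carrier_mat[OF XC] C0 x] by simp
      also have "(2 \<cdot>\<^sub>m (X * cheb_mat (Suc k') X)) *\<^sub>v x = 2 \<cdot>\<^sub>v (X *\<^sub>v (cheb_mat (Suc k') X *\<^sub>v x))"
        using smult_mat_vec[OF XC x] assoc_mult_mat_vec[OF X C1 x] by simp
      also have "\<dots> = (2 * l * cheb (Suc k') l) \<cdot>\<^sub>v x"
        unfolding I1 using X x Xx by (simp add: mult_mat_vec smult_smult_assoc mult.commute mult.left_commute)
      also have "(2 * l * cheb (Suc k') l) \<cdot>\<^sub>v x - cheb_mat k' X *\<^sub>v x = cheb k l \<cdot>\<^sub>v x"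
        unfolding I0 k using x by (intro eq_vecI) (simp_all add: algebra_simps)
      finally show ?thesis .
    qed
  qed
qed

lemma vnorm_sprod: "vnorm v = sqrt (v \<bullet> v)"
  unfolding vnorm_def scalar_prod_def by (simp add: atLeast0LessThan power2_eq_square)

lemma spec_norm_bdd:
  fixes M :: "real mat"
  shows "bdd_above (insert 0 {vnorm (M *\<^sub>v v) | v. v \<in> carrier_vec (dim_col M) \<and> vnorm v = 1})"
proof -
  define B where "B = sqrt (\<Sum>i<dim_row M. (\<Sum>j<dim_col M. \<bar>M$$(i,j)\<bar>)^2)"
  have "vnorm (M *\<^sub>v v) \<le> B" if v: "v \<in> carrier_vec (dim_col M)" "vnorm v = 1" for v
  proof -
    have vv: "(\<Sum>j<dim_col M. (v$j)^2) = 1" using v unfolding vnorm_def by simp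
    have vj: "\<bar>v$j\<bar> \<le> 1" if "j < dim_col M" for j
    proof -
      have "(v$j)^2 \<le> (\<Sum>j<dim_col M. (v$j)^2)" by (rule member_le_sum) (use that in auto)
      then have "(v$j)^2 \<le> 1^2" using vv by simp
      then show ?thesis using abs_le_square_iff[of "v$j" 1] by simp
    qed
    have "\<bar>(M *\<^sub>v v) $ i\<bar> \<le> (\<Sum>j<dim_col M. \<bar>M$$(i,j)\<bar>)" if i: "i < dim_row M" for i
    proof -
      have "\<bar>(M *\<^sub>v v) $ i\<bar> = \<bar>\<Sum>j<dim_col M. M$$(i,j) * v$j\<bar>"
        using i v by (simp add: scalar_prod_def atLeast0LessThan)
      also have "\<dots> \<le> (\<Sum>j<dim_col M. \<bar>M$$(i,j) * v$j\<bar>)" by (rule sum_abs)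
      also have "\<dots> \<le> (\<Sum>j<dim_col M. \<bar>M$$(i,j)\<bar>)"
        by (rule sum_mono) (auto simp: abs_mult intro: mult_left_le vj)
      finally show ?thesis .
    qed
    then have "((M *\<^sub>v v) $ i)^2 \<le> (\<Sum>j<dim_col M. \<bar>M$$(i,j)\<bar>)^2" if "i < dim_row M" for i
    proof -
      have "\<bar>(M *\<^sub>v v) $ i\<bar> \<le> \<bar>\<Sum>j<dim_col M. \<bar>M$$(i,j)\<bar>\<bar>"
        using \<open>\<And>i. i < dim_row M \<Longrightarrow> _\<close>[OF that] by simp
      then show ?thesis using abs_le_square_iff by blast
    qed
    then have "(\<Sum>i<dim_row M. ((M *\<^sub>v v) $ i)^2) \<le> (\<Sum>i<dim_row M. (\<Sum>j<dim_col M. \<bar>M$$(i,j)\<bar>)^2)"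
      by (intro sum_mono) auto
    then show ?thesis unfolding vnorm_def B_def by simp
  qed
  then show ?thesis by (intro bdd_aboveI[of _ "max 0 B"]) (auto simp: le_max_iff_disj)
qed

lemma spec_norm_nonneg: "spec_norm M \<ge> 0"
  unfolding spec_norm_def by (rule cSup_upper[OF _ spec_norm_bdd]) simp

lemma spec_norm_ge:
  assumes "v \<in> carrier_vec (dim_col M)" "vnorm v = 1"
  shows "vnorm (M *\<^sub>v v) \<le> spec_norm M"
  unfolding spec_norm_def by (rule cSup_upper[OF _ spec_norm_bdd]) (use assms in blast)



lemma amgm_sum_bound:
  fixes W G :: "nat \<Rightarrow> nat \<Rightarrow> real"
  assumes F1: "\<And>i. i < n \<Longrightarrow> (\<Sum>l<n. (W i l)^2) = 1"
    and F4: "\<And>l. l < n \<Longrightarrow> (\<Sum>i<n. (G i l)^2) \<le> s^2" and s: "s \<ge> 0"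
  shows "(\<Sum>i<n. \<Sum>l<n. \<bar>W i l\<bar> * \<bar>G i l\<bar>) \<le> real n * s"
proof (cases "s = 0")
  case True
  have "G i l = 0" if "i < n" "l < n" for i l
  proof -
    have "(G i l)^2 \<le> (\<Sum>i<n. (G i l)^2)" by (rule member_le_sum) (use that in auto)
    also have "\<dots> \<le> 0" using F4[OF that(2)] True by simp
    finally show ?thesis by simp
  qed
  then show ?thesis using True by simp
next
  case False
  then have sp: "s > 0" using s by simp
  have ab: "\<bar>W i l\<bar> * \<bar>G i l\<bar> \<le> (s * (W i l)^2 + (G i l)^2 / s) / 2" for i l
  proof -
    have "0 \<le> (s * \<bar>W i l\<bar> - \<bar>G i l\<bar>)^2" by simp
    then have "2 * s * (\<bar>W i l\<bar> * \<bar>G i l\<bar>) \<le> s^2 * (W i l)^2 + (G i l)^2"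
      by (simp add: power2_diff power_mult_distrib algebra_simps)
    then show ?thesis using sp by (simp add: field_simps power2_eq_square)
  qed
  have "(\<Sum>i<n. \<Sum>l<n. \<bar>W i l\<bar> * \<bar>G i l\<bar>) \<le> (\<Sum>i<n. \<Sum>l<n. (s * (W i l)^2 + (G i l)^2 / s) / 2)"
    by (intro sum_mono ab)
  also have "\<dots> = (s * (\<Sum>i<n. \<Sum>l<n. (W i l)^2) + (\<Sum>l<n. \<Sum>i<n. (G i l)^2) / s) / 2"
  proof -
    have "(\<Sum>i<n. \<Sum>l<n. (s * (W i l)^2 + (G i l)^2 / s) / 2)
       = (s * (\<Sum>i<n. \<Sum>l<n. (W i l)^2) + (\<Sum>i<n. \<Sum>l<n. (G i l)^2) / s) / 2"
      by (simp add: sum.distrib sum_distrib_left sum_divide_distrib add_divide_distrib)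
    also have "(\<Sum>i<n. \<Sum>l<n. (G i l)^2) = (\<Sum>l<n. \<Sum>i<n. (G i l)^2)"
      by (rule sum.swap)
    finally show ?thesis .
  qed
  also have "(\<Sum>i<n. \<Sum>l<n. (W i l)^2) = real n" using F1 by simp
  also have "(\<Sum>l<n. \<Sum>i<n. (G i l)^2) \<le> real n * s^2"
    using sum_mono[of "{..<n}" "\<lambda>l. \<Sum>i<n. (G i l)^2" "\<lambda>_. s^2"] F4 by simp
  finally show ?thesis using sp by (simp add: field_simps power2_eq_square divide_right_mono)
qed


lemma trace_cheb_lip:
  fixes X Y :: "real mat"
  assumes X: "X \<in> carrier_mat n n" and symX: "transpose_mat X = X"
    and Y: "Y \<in> carrier_mat n n" and symY: "transpose_mat Y = Y"
    and specX: "spec X \<subseteq> {-1..1}" and specY: "spec Y \<subseteq> {-1..1}"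
  shows "\<bar>mtrace (cheb_mat k X) - mtrace (cheb_mat k Y)\<bar> \<le> real n * (real k)^2 * spec_norm (X - Y)"
proof -
  obtain QX dX where QX: "QX \<in> carrier_mat n n" and QXQ: "transpose_mat QX * QX = 1\<^sub>m n"
    and XQ: "X * QX = QX * dmat n dX" using spectral[OF X symX] by blast
  obtain QY dY where QY: "QY \<in> carrier_mat n n" and QYQ: "transpose_mat QY * QY = 1\<^sub>m n"
    and YQ: "Y * QY = QY * dmat n dY" using spectral[OF Y symY] by blast
  define x where "x i = col QX i" for i
  define y where "y i = col QY i" for i
  have xc: "x i \<in> carrier_vec n" for i using QX by (simp add: x_def carrier_vecI)
  have yc: "y i \<in> carrier_vec n" for i using QY by (simp add: y_def carrier_vecI)
  have xx: "x i \<bullet> x i = 1" if "i < n" for i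
    using orth_col_sprod[OF QX QXQ that that] by (simp add: x_def)
  have yy: "y i \<bullet> y i = 1" if "i < n" for i
    using orth_col_sprod[OF QY QYQ that that] by (simp add: y_def)
  have Xx: "X *\<^sub>v x i = dX i \<cdot>\<^sub>v x i" if "i < n" for i
    using spectral_cols[OF X QX XQ that] by (simp add: x_def)
  have Yy: "Y *\<^sub>v y i = dY i \<cdot>\<^sub>v y i" if "i < n" for i
    using spectral_cols[OF Y QY YQ that] by (simp add: y_def)
  have lamX: "dX i \<in> {-1..1}" if i: "i < n" for i
  proof -
    have "x i \<noteq> 0\<^sub>v n" using xx[OF i] by auto
    then have "eigenvector X (x i) (dX i)" using xc X Xx[OF i] by (simp add: eigenvector_def)
    then have "dX i \<in> spec X" unfolding spec_def eigenvalue_def by blast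
    then show ?thesis using specX by blast
  qed
  have lamY: "dY i \<in> {-1..1}" if i: "i < n" for i
  proof -
    have "y i \<noteq> 0\<^sub>v n" using yy[OF i] by auto
    then have "eigenvector Y (y i) (dY i)" using yc Y Yy[OF i] by (simp add: eigenvector_def)
    then have "dY i \<in> spec Y" unfolding spec_def eigenvalue_def by blast
    then show ?thesis using specY by blast
  qed
  have trX: "mtrace (cheb_mat k X) = (\<Sum>i<n. cheb k (dX i))"
  proof -
    have "mtrace (cheb_mat k X) = (\<Sum>i<n. x i \<bullet> (cheb_mat k X *\<^sub>v x i))"
      using trace_orth[OF QX QXQ cheb_mat_carrier[OF X]] by (simp add: x_def)
    also have "\<dots> = (\<Sum>i<n. cheb k (dX i))"
    proof (rule sum.cong)
      fix i assume "i \<in> {..<n}"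
      then have i: "i < n" by simp
      have "x i \<bullet> (cheb_mat k X *\<^sub>v x i) = x i \<bullet> (cheb k (dX i) \<cdot>\<^sub>v x i)"
        using cheb_mat_eigen[OF X xc Xx[OF i]] by simp
      also have "\<dots> = cheb k (dX i)" using xx[OF i] xc by simp
      finally show "x i \<bullet> (cheb_mat k X *\<^sub>v x i) = cheb k (dX i)" .
    qed simp
    finally show ?thesis .
  qed
  have trY: "mtrace (cheb_mat k Y) = (\<Sum>i<n. cheb k (dY i))"
  proof -
    have "mtrace (cheb_mat k Y) = (\<Sum>i<n. y i \<bullet> (cheb_mat k Y *\<^sub>v y i))"
      using trace_orth[OF QY QYQ cheb_mat_carrier[OF Y]] by (simp add: y_def)
    also have "\<dots> = (\<Sum>i<n. cheb k (dY i))"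
    proof (rule sum.cong)
      fix i assume "i \<in> {..<n}"
      then have i: "i < n" by simp
      have "y i \<bullet> (cheb_mat k Y *\<^sub>v y i) = y i \<bullet> (cheb k (dY i) \<cdot>\<^sub>v y i)"
        using cheb_mat_eigen[OF Y yc Yy[OF i]] by simp
      also have "\<dots> = cheb k (dY i)" using yy[OF i] yc by simp
      finally show "y i \<bullet> (cheb_mat k Y *\<^sub>v y i) = cheb k (dY i)" .
    qed simp
    finally show ?thesis .
  qed
  define W where "W i l = x i \<bullet> y l" for i l
  define s where "s = spec_norm (X - Y)"
  have XY: "X - Y \<in> carrier_mat n n" using X Y by (simp add: minus_carrier_mat)
  define G where "G i l = x i \<bullet> ((X - Y) *\<^sub>v y l)" for i l
  have F1: "(\<Sum>l<n. (W i l)^2) = 1" if i: "i < n" for i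
  proof -
    have "(\<Sum>l<n. (W i l)^2) = (\<Sum>l<n. (col QY l \<bullet> x i)^2)"
      unfolding W_def y_def by (intro sum.cong refl) (metis comm_scalar_prod[OF yc xc] y_def)
    also have "\<dots> = 1" using parseval[OF QY QYQ xc] xx[OF i] by simp
    finally show ?thesis .
  qed
  have F2: "(\<Sum>i<n. (W i l)^2) = 1" if l: "l < n" for l
    using parseval[OF QX QXQ yc] yy[OF l] by (simp add: W_def x_def)
  have F3: "G i l = (dX i - dY l) * W i l" if i: "i < n" and l: "l < n" for i l
  proof -
    have "(X - Y) *\<^sub>v y l = X *\<^sub>v y l - Y *\<^sub>v y l" by (rule minus_mult_distrib_mat_vec[OF X Y yc])
    then have "G i l = x i \<bullet> (X *\<^sub>v y l) - x i \<bullet> (Y *\<^sub>v y l)"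
      unfolding G_def using X Y xc yc by (simp add: scalar_prod_minus_distrib[of _ n])
    also have "x i \<bullet> (X *\<^sub>v y l) = (transpose_mat X *\<^sub>v x i) \<bullet> y l"
      by (rule transpose_vec_mult_scalar[OF X yc xc, symmetric])
    also have "\<dots> = dX i * W i l" unfolding symX Xx[OF i] W_def using smult_scalar_prod_distrib[OF xc yc] by simp
    also have "x i \<bullet> (Y *\<^sub>v y l) = dY l * W i l" unfolding Yy[OF l] W_def using scalar_prod_smult_distrib[OF xc yc] by simp
    finally show ?thesis by (simp add: algebra_simps)
  qed
  have s0: "s \<ge> 0" unfolding s_def by (rule spec_norm_nonneg)
  have F4: "(\<Sum>i<n. (G i l)^2) \<le> s^2" if l: "l < n" for l
  proof -
    define z where "z = (X - Y) *\<^sub>v y l"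
    have zc: "z \<in> carrier_vec n" using XY yc by (simp add: z_def)
    have "(\<Sum>i<n. (G i l)^2) = z \<bullet> z" using parseval[OF QX QXQ zc] by (simp add: G_def z_def x_def)
    also have "\<dots> = (vnorm z)^2"
    proof -
      have "z \<bullet> z \<ge> 0" unfolding scalar_prod_def by (intro sum_nonneg) simp
      then show ?thesis by (simp add: vnorm_sprod)
    qed
    also have "\<dots> \<le> s^2"
    proof -
      have "vnorm (y l) = 1" using yy[OF l] by (simp add: vnorm_sprod)
      then have "vnorm z \<le> s" unfolding z_def s_def using yc XY
        by (intro spec_norm_ge) auto
      moreover have "vnorm z \<ge> 0" by (simp add: vnorm_def sum_nonneg)
      ultimately show ?thesis by (simp add: power_mono)
    qed
    finally show ?thesis .
  qed
  have "(\<Sum>i<n. cheb k (dX i)) = (\<Sum>i<n. \<Sum>l<n. (W i l)^2 * cheb k (dX i))"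
    by (intro sum.cong refl) (simp add: F1 flip: sum_distrib_right)
  moreover have "(\<Sum>l<n. cheb k (dY l)) = (\<Sum>i<n. \<Sum>l<n. (W i l)^2 * cheb k (dY l))"
  proof -
    have "(\<Sum>l<n. cheb k (dY l)) = (\<Sum>l<n. \<Sum>i<n. (W i l)^2 * cheb k (dY l))"
      by (intro sum.cong refl) (simp add: F2 flip: sum_distrib_right)
    also have "\<dots> = (\<Sum>i<n. \<Sum>l<n. (W i l)^2 * cheb k (dY l))" by (rule sum.swap)
    finally show ?thesis .
  qed
  ultimately have "mtrace (cheb_mat k X) - mtrace (cheb_mat k Y)
      = (\<Sum>i<n. \<Sum>l<n. (W i l)^2 * (cheb k (dX i) - cheb k (dY l)))"
  proof -
    assume a1: "(\<Sum>i<n. cheb k (dX i)) = (\<Sum>i<n. \<Sum>l<n. (W i l)^2 * cheb k (dX i))"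
      and a2: "(\<Sum>l<n. cheb k (dY l)) = (\<Sum>i<n. \<Sum>l<n. (W i l)^2 * cheb k (dY l))"
    have "mtrace (cheb_mat k X) - mtrace (cheb_mat k Y) =
      (\<Sum>i<n. \<Sum>l<n. (W i l)^2 * cheb k (dX i)) - (\<Sum>i<n. \<Sum>l<n. (W i l)^2 * cheb k (dY l))"
      unfolding trX trY a1 a2 ..
    also have "\<dots> = (\<Sum>i<n. \<Sum>l<n. (W i l)^2 * cheb k (dX i) - (W i l)^2 * cheb k (dY l))"
      by (simp only: sum_subtractf)
    also have "\<dots> = (\<Sum>i<n. \<Sum>l<n. (W i l)^2 * (cheb k (dX i) - cheb k (dY l)))"
      by (simp only: right_diff_distrib)
    finally show ?thesis .
  qed
  then have "\<bar>mtrace (cheb_mat k X) - mtrace (cheb_mat k Y)\<bar>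
      \<le> (\<Sum>i<n. \<Sum>l<n. \<bar>(W i l)^2 * (cheb k (dX i) - cheb k (dY l))\<bar>)"
    using order.trans[OF sum_abs sum_mono[OF sum_abs]] by simp
  also have "\<dots> \<le> (\<Sum>i<n. \<Sum>l<n. (real k)^2 * (\<bar>W i l\<bar> * \<bar>G i l\<bar>))"
  proof (intro sum_mono)
    fix i l assume "i \<in> {..<n}" "l \<in> {..<n}"
    then have i: "i < n" and l: "l < n" by auto
    have "\<bar>(W i l)^2 * (cheb k (dX i) - cheb k (dY l))\<bar> = (W i l)^2 * \<bar>cheb k (dX i) - cheb k (dY l)\<bar>"
      by (simp add: abs_mult)
    also have "\<dots> \<le> (W i l)^2 * ((real k)^2 * \<bar>dX i - dY l\<bar>)"
      by (intro mult_left_mono cheb_lip lamX lamY i l) simp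
    also have "\<dots> = (real k)^2 * (\<bar>W i l\<bar> * \<bar>G i l\<bar>)"
      unfolding F3[OF i l] by (simp add: abs_mult power2_eq_square)
    finally show "\<bar>(W i l)^2 * (cheb k (dX i) - cheb k (dY l))\<bar> \<le> (real k)^2 * (\<bar>W i l\<bar> * \<bar>G i l\<bar>)" .
  qed
  also have "\<dots> = (real k)^2 * (\<Sum>i<n. \<Sum>l<n. \<bar>W i l\<bar> * \<bar>G i l\<bar>)"
    by (simp add: sum_distrib_left)
  also have "\<dots> \<le> (real k)^2 * (real n * s)"
    by (intro mult_left_mono amgm_sum_bound[OF F1 F4 s0]) auto
  finally show ?thesis by (simp add: s_def algebra_simps)
qed



definition L2 :: "nat \<Rightarrow> (nat \<Rightarrow> real) \<Rightarrow> real" where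
  "L2 K f = sqrt (\<Sum>k<K. (f k)^2)"

lemma L2_nonneg: "L2 K f \<ge> 0" by (simp add: L2_def sum_nonneg)

lemma L2_sq: "(L2 K f)^2 = (\<Sum>k<K. (f k)^2)" by (simp add: L2_def sum_nonneg)

lemma cauchy_schwarz: "(\<Sum>k<K. f k * g k) \<le> L2 K f * L2 K g"
proof -
  define a where "a = L2 K f"
  define b where "b = L2 K g"
  have a0: "a \<ge> 0" and b0: "b \<ge> 0" by (simp_all add: a_def b_def L2_nonneg)
  have aa: "(\<Sum>k<K. (f k)^2) = a^2" by (simp add: a_def L2_sq)
  have bb: "(\<Sum>k<K. (g k)^2) = b^2" by (simp add: b_def L2_sq)
  show ?thesis
  proof (cases "a = 0 \<or> b = 0")
    case True
    then have "(\<forall>k<K. f k = 0) \<or> (\<forall>k<K. g k = 0)"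
    proof
      assume "a = 0"
      then have "(\<Sum>k<K. (f k)^2) = 0" using aa by simp
      then show ?thesis using sum_nonneg_eq_0_iff[of "{..<K}" "\<lambda>k. (f k)^2"] by auto
    next
      assume "b = 0"
      then have "(\<Sum>k<K. (g k)^2) = 0" using bb by simp
      then show ?thesis using sum_nonneg_eq_0_iff[of "{..<K}" "\<lambda>k. (g k)^2"] by auto
    qed
    then have "(\<Sum>k<K. f k * g k) = 0" by auto
    then show ?thesis using a0 b0 by (simp add: a_def b_def)
  next
    case False
    then have ap: "a > 0" and bp: "b > 0" using a0 b0 by auto
    have "0 \<le> (\<Sum>k<K. (b * f k - a * g k)^2)" by (simp add: sum_nonneg)
    also have "\<dots> = b^2 * (\<Sum>k<K. (f k)^2) - 2 * a * b * (\<Sum>k<K. f k * g k) + a^2 * (\<Sum>k<K. (g k)^2)"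
      by (simp add: power2_diff sum.distrib sum_subtractf sum_distrib_left power_mult_distrib algebra_simps)
    also have "\<dots> = 2 * a * b * (a * b - (\<Sum>k<K. f k * g k))"
      unfolding aa bb by (simp add: power2_eq_square algebra_simps)
    finally have h: "0 \<le> 2 * a * b * (a * b - (\<Sum>k<K. f k * g k))" .
    have "2 * a * b > 0" using ap bp by simp
    then have "0 \<le> a * b - (\<Sum>k<K. f k * g k)" using h by (simp add: zero_le_mult_iff)
    then show ?thesis by (simp add: a_def b_def)
  qed
qed

lemma L2_triangle: "L2 K (\<lambda>k. f k + g k) \<le> L2 K f + L2 K g"
proof -
  have "(L2 K (\<lambda>k. f k + g k))^2 = (\<Sum>k<K. (f k)^2) + 2 * (\<Sum>k<K. f k * g k) + (\<Sum>k<K. (g k)^2)"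
    by (simp add: L2_sq power2_sum sum.distrib sum_distrib_left algebra_simps)
  also have "\<dots> \<le> (L2 K f)^2 + 2 * (L2 K f * L2 K g) + (L2 K g)^2"
    using cauchy_schwarz[of f g K] by (simp add: L2_sq)
  also have "\<dots> = (L2 K f + L2 K g)^2" by (simp add: power2_sum)
  finally show ?thesis
    using L2_nonneg[of K f] L2_nonneg[of K g] L2_nonneg[of K "\<lambda>k. f k + g k"]
    by (meson add_nonneg_nonneg power2_le_imp_le)
qed

lemma L2_scale: "L2 K (\<lambda>k. c * f k) = \<bar>c\<bar> * L2 K f"
  by (simp add: L2_def power_mult_distrib sum_distrib_left[symmetric] real_sqrt_mult)

lemma L2_cong: "(\<And>k. k < K \<Longrightarrow> f k = g k) \<Longrightarrow> L2 K f = L2 K g"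
  unfolding L2_def by (metis (no_types, lifting) lessThan_iff sum.cong)

lemma L2_minus_comm: "L2 K (\<lambda>k. f k - g k) = L2 K (\<lambda>k. g k - f k)"
  unfolding L2_def by (simp add: power2_commute)

lemma L2_rev_triangle: "\<bar>L2 K g - L2 K f\<bar> \<le> L2 K (\<lambda>k. f k - g k)"
proof -
  have 1: "L2 K g \<le> L2 K f + L2 K (\<lambda>k. g k - f k)"
    using L2_triangle[of K f "\<lambda>k. g k - f k"] by simp
  have 2: "L2 K f \<le> L2 K g + L2 K (\<lambda>k. f k - g k)"
    using L2_triangle[of K g "\<lambda>k. f k - g k"] by simp
  show ?thesis using 1 2 L2_minus_comm[of K f g] by linarith
qed

lemma unit_diff:
  assumes na: "L2 K a > 0"
  shows "L2 K (\<lambda>k. a k / L2 K a - b k / L2 K b) \<le> 2 * L2 K (\<lambda>k. a k - b k) / L2 K a"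
proof -
  define na where "na = L2 K a"
  define nb where "nb = L2 K b"
  have nbp: "nb \<ge> 0" by (simp add: nb_def L2_nonneg)
  have eq: "a k / na - b k / nb = (1 / na) * (a k - b k) + (1 / na - 1 / nb) * b k" for k
    by (simp add: algebra_simps diff_divide_distrib)
  have "L2 K (\<lambda>k. a k / na - b k / nb) \<le> L2 K (\<lambda>k. (1 / na) * (a k - b k)) + L2 K (\<lambda>k. (1 / na - 1 / nb) * b k)"
    unfolding eq by (rule L2_triangle)
  also have "\<dots> = (1 / na) * L2 K (\<lambda>k. a k - b k) + \<bar>1 / na - 1 / nb\<bar> * nb"
    using na L2_scale[of K "1 / na" "\<lambda>k. a k - b k"] L2_scale[of K "1 / na - 1 / nb" b]
    by (simp add: na_def nb_def)
  also have "\<bar>1 / na - 1 / nb\<bar> * nb \<le> (1 / na) * L2 K (\<lambda>k. a k - b k)"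
  proof (cases "nb = 0")
    case True then show ?thesis using na by (simp add: na_def L2_nonneg)
  next
    case False
    have nap: "na > 0" using na by (simp add: na_def)
    have nbq: "nb > 0" using False nbp by simp
    have "1 / na - 1 / nb = (nb - na) / (na * nb)" using nap nbq by (simp add: field_simps)
    then have "\<bar>1 / na - 1 / nb\<bar> = \<bar>nb - na\<bar> / (na * nb)" using nap nbq by (simp add: abs_divide)
    then have "\<bar>1 / na - 1 / nb\<bar> * nb = \<bar>nb - na\<bar> / na" using nap nbq by simp
    also have "\<dots> \<le> L2 K (\<lambda>k. a k - b k) / na"
      using L2_rev_triangle[of K b a] na by (intro divide_right_mono) (simp_all add: na_def nb_def)
    finally show ?thesis by simp
  qed
  finally show ?thesis by (simp add: na_def nb_def)
qed



lemma exp_pow_lb: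
  assumes x: "x \<ge> 0" and m: "m > 0"
  shows "(x / real m)^m \<le> exp x"
proof -
  have "exp x = exp (x / real m) ^ m"
    using m by (simp add: exp_of_nat_mult[symmetric])
  moreover have "x / real m \<le> exp (x / real m)"
    using exp_ge_add_one_self[of "x / real m"] by linarith
  ultimately show ?thesis using x by (simp add: power_mono)
qed

lemma geom_bound:
  assumes eta: "eta > (0::real)"
  shows "(\<Sum>k<K. exp (- eta * real k)) \<le> 1 + 1 / eta"
proof -
  define q where "q = exp (- eta)"
  have q0: "q > 0" and q1: "q < 1" using eta by (auto simp: q_def)
  have "(\<Sum>k<K. exp (- eta * real k)) = (\<Sum>k<K. q ^ k)"
    by (intro sum.cong refl) (simp add: q_def exp_of_nat_mult[symmetric] mult.commute)
  also have "\<dots> = (1 - q ^ K) / (1 - q)" using q1 by (simp add: sum_gp_strict)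
  also have "\<dots> \<le> 1 / (1 - q)" using q0 q1 by (intro divide_right_mono) auto
  also have "\<dots> \<le> 1 + 1 / eta"
  proof -
    have "1 + eta \<le> exp eta" by (rule exp_ge_add_one_self)
    then have "q * (1 + eta) \<le> 1" unfolding q_def using eta
      by (metis exp_ge_zero exp_minus_inverse mult.commute mult_left_mono)
    then have "eta \<le> (1 - q) * (1 + eta)" by (simp add: algebra_simps)
    then show ?thesis using eta q1 by (simp add: field_simps)
  qed
  finally show ?thesis .
qed

lemma exp_sum_bound:
  assumes eta: "eta > (0::real)"
  shows "(\<Sum>k<K. exp (- 2 * eta * real k) * (real k)^4) \<le> 6250 / eta^5"
proof -
  define C where "C = (if eta \<le> 1 then 256 / eta^4 else 3125 / eta^5)"
  have tm: "exp (- 2 * eta * real k) * (real k)^4 \<le> C * exp (- eta * real k)" for k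
  proof -
    have e: "exp (- 2 * eta * real k) = exp (- eta * real k) * exp (- eta * real k)"
      by (simp add: exp_add[symmetric])
    have e2: "exp (- eta * real k) * exp (eta * real k) = 1" by (simp add: exp_add[symmetric])
    have kp: "(real k)^4 \<le> C * exp (eta * real k)"
    proof (cases "eta \<le> 1")
      case True
      have "(eta * real k / real (4::nat))^4 \<le> exp (eta * real k)"
        using eta by (intro exp_pow_lb) auto
      then have "eta^4 * (real k)^4 / 256 \<le> exp (eta * real k)"
        by (simp add: power_divide power_mult_distrib)
      then show ?thesis using True eta by (simp add: C_def field_simps)
    next
      case False
      have "(eta * real k / real (5::nat))^5 \<le> exp (eta * real k)"
        using eta by (intro exp_pow_lb) auto
      then have "eta^5 * (real k)^5 / 3125 \<le> exp (eta * real k)"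
        by (simp add: power_divide power_mult_distrib)
      moreover have "(real k)^4 \<le> (real k)^5"
        by (cases k) (auto intro: power_increasing)
      ultimately have "eta^5 * (real k)^4 / 3125 \<le> exp (eta * real k)"
        using eta by (smt (verit, ccfv_SIG) divide_right_mono mult_left_mono zero_le_power)
      then show ?thesis using False eta by (simp add: C_def field_simps)
    qed
    have "exp (- 2 * eta * real k) * (real k)^4 \<le> exp (- 2 * eta * real k) * (C * exp (eta * real k))"
      by (intro mult_left_mono kp) simp
    also have "\<dots> = C * exp (- eta * real k) * (exp (- eta * real k) * exp (eta * real k))"
      unfolding e by (simp add: algebra_simps)
    also have "\<dots> = C * exp (- eta * real k)" unfolding e2 by simp
    finally show ?thesis .
  qed
  have C0: "C \<ge> 0" using eta by (simp add: C_def)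
  have "(\<Sum>k<K. exp (- 2 * eta * real k) * (real k)^4) \<le> (\<Sum>k<K. C * exp (- eta * real k))"
    by (intro sum_mono tm)
  also have "\<dots> = C * (\<Sum>k<K. exp (- eta * real k))" by (simp add: sum_distrib_left)
  also have "\<dots> \<le> C * (1 + 1 / eta)" by (intro mult_left_mono geom_bound eta C0)
  also have "\<dots> \<le> 6250 / eta^5"
  proof (cases "eta \<le> 1")
    case True
    have "1 + 1 / eta \<le> 2 / eta" using True eta by (simp add: field_simps)
    then have "C * (1 + 1 / eta) \<le> C * (2 / eta)" by (rule mult_left_mono[OF _ C0])
    also have "C * (2 / eta) = 512 / eta^5" using True eta
      by (simp add: C_def field_simps eval_nat_numeral)
    also have "\<dots> \<le> 6250 / eta^5" using eta by (simp add: divide_right_mono)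
    finally show ?thesis .
  next
    case False
    have "1 + 1 / eta \<le> 2" using False eta by (simp add: field_simps)
    then have "C * (1 + 1 / eta) \<le> C * 2" by (rule mult_left_mono[OF _ C0])
    also have "C * 2 = 6250 / eta^5" using False by (simp add: C_def)
    finally show ?thesis by simp
  qed
  finally show ?thesis .
qed




lemma a1: "(eta::real) > 0 \<Longrightarrow> eta powr 5 = eta^5"
  by (simp add: powr_numeral)
lemma a2: "(eta::real) > 0 \<Longrightarrow> (eta powr 5) powr (1/2) = eta powr (5/2)"
  by (subst powr_powr) simp
lemma a3: "(eta::real) > 0 \<Longrightarrow> eta powr (-5/2) = 1 / eta powr (5/2)"
  by (simp add: powr_minus_divide)
lemma powr_52: "(eta::real) > 0 \<Longrightarrow> eta powr (-5/2) = sqrt (1 / eta^5)"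
proof -
  assume eta: "eta > 0"
  have "sqrt (eta^5) = (eta^5) powr (1/2)" using eta by (simp add: powr_half_sqrt)
  also have "\<dots> = eta powr (5/2)" using a1[OF eta, symmetric] a2[OF eta] by simp
  finally show ?thesis using a3[OF eta] by (simp add: real_sqrt_divide)
qed

lemma normalize_sym:
  assumes "real_sym n M"
  shows "normalize_mat eps M \<in> carrier_mat n n \<and> transpose_mat (normalize_mat eps M) = normalize_mat eps M"
proof -
  have M: "M \<in> carrier_mat n n" and sym: "transpose_mat M = M" using assms by (auto simp: real_sym_def)
  define mm where "mm = (lam_max M + lam_min M) / 2"
  define r where "r = (1 + eps) * ((lam_max M - lam_min M) / 2)"
  have N: "normalize_mat eps M = (1 / r) \<cdot>\<^sub>m (M - mm \<cdot>\<^sub>m 1\<^sub>m n)"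
    unfolding normalize_mat_def mm_def r_def Let_def using M by simp
  have c: "normalize_mat eps M \<in> carrier_mat n n" unfolding N using M by (simp add: minus_carrier_mat)
  have "transpose_mat (normalize_mat eps M) = normalize_mat eps M"
  proof (rule eq_matI)
    fix i j assume "i < dim_row (normalize_mat eps M)" "j < dim_col (normalize_mat eps M)"
    then have ij: "i < n" "j < n" using c by auto
    have "M $$ (j, i) = M $$ (i, j)" using ij M sym by (metis carrier_matD index_transpose_mat(1))
    then show "transpose_mat (normalize_mat eps M) $$ (i, j) = normalize_mat eps M $$ (i, j)"
    proof -
      have "(normalize_mat eps M) $$ (j, i) = (1 / r) * (M $$ (j, i) - mm * (if j = i then 1 else 0))"
        unfolding N using ij M by simp
      moreover have "(normalize_mat eps M) $$ (i, j) = (1 / r) * (M $$ (i, j) - mm * (if i = j then 1 else 0))"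
        unfolding N using ij M by simp
      ultimately show ?thesis using ij c \<open>M $$ (j, i) = M $$ (i, j)\<close> by auto
    qed
  qed (use c in auto)
  with c show ?thesis by simp
qed

lemma vnorm_vec: "vnorm (vec K f) = L2 K f"
proof -
  have "(\<Sum>i<K. (vec K f $ i)^2) = (\<Sum>i<K. (f i)^2)" by (rule sum.cong) auto
  then show ?thesis unfolding vnorm_def L2_def by simp
qed

lemma mtrace_one: "mtrace (1\<^sub>m n) = real n"
proof -
  have "(\<Sum>i<n. 1\<^sub>m n $$ (i, i)) = (\<Sum>i<n. (1::real))" by (rule sum.cong) auto
  then show ?thesis unfolding mtrace_def by simp
qed

lemma mtrace_zero_dim: "M \<in> carrier_mat 0 0 \<Longrightarrow> mtrace M = 0"
  unfolding mtrace_def by simp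


lemma main_bound:
  assumes symA: "real_sym n A" and symB: "real_sym n B" and eps: "eps > 0" and eta: "eta > 0"
    and specA: "spec (normalize_mat eps A) \<subseteq> {-1..1}" and specB: "spec (normalize_mat eps B) \<subseteq> {-1..1}"
  shows "(\<forall>k::nat.
         \<bar>mtrace (cheb_mat k (normalize_mat eps A)) - mtrace (cheb_mat k (normalize_mat eps B))\<bar>
           \<le> real n * 2 * (real k)\<^sup>2 * spec_norm (normalize_mat eps A - normalize_mat eps B))
      \<and>
      (\<forall>K::nat. K \<ge> 1 \<longrightarrow>
         vnorm (phi eta eps K A - phi eta eps K B)
           \<le> real n / vnorm (s_vec eta eps K A)
             * sqrt (\<Sum>k<K. exp (- 2 * eta * real k) * 2\<^sup>2 * (real k) ^ 4)
             * spec_norm (normalize_mat eps A - normalize_mat eps B)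
         \<and>
         real n / vnorm (s_vec eta eps K A)
             * sqrt (\<Sum>k<K. exp (- 2 * eta * real k) * 2\<^sup>2 * (real k) ^ 4)
             * spec_norm (normalize_mat eps A - normalize_mat eps B)
           \<le> 200 * real n * eta powr (-5/2) * spec_norm (normalize_mat eps A - normalize_mat eps B))"
proof -
  define X where "X = normalize_mat eps A"
  define Y where "Y = normalize_mat eps B"
  have X: "X \<in> carrier_mat n n" and sX: "transpose_mat X = X"
    using normalize_sym[OF symA] by (auto simp: X_def)
  have Y: "Y \<in> carrier_mat n n" and sY: "transpose_mat Y = Y"
    using normalize_sym[OF symB] by (auto simp: Y_def)
  define s where "s = spec_norm (X - Y)"
  have s0: "s \<ge> 0" by (simp add: s_def spec_norm_nonneg)
  have lip: "\<bar>mtrace (cheb_mat k X) - mtrace (cheb_mat k Y)\<bar> \<le> real n * (real k)^2 * s" for k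
    using trace_cheb_lip[OF X sX Y sY specA[folded X_def] specB[folded Y_def]] by (simp add: s_def)
  have P1: "\<bar>mtrace (cheb_mat k X) - mtrace (cheb_mat k Y)\<bar> \<le> real n * 2 * (real k)^2 * s" for k
  proof -
    have "real n * (real k)^2 * s \<le> real n * 2 * (real k)^2 * s"
      using s0 by (simp add: mult_right_mono mult_left_mono)
    then show ?thesis using lip[of k] by linarith
  qed
  have P2: "vnorm (phi eta eps K A - phi eta eps K B)
           \<le> real n / vnorm (s_vec eta eps K A)
             * sqrt (\<Sum>k<K. exp (- 2 * eta * real k) * 2\<^sup>2 * (real k) ^ 4) * s
         \<and> real n / vnorm (s_vec eta eps K A)
             * sqrt (\<Sum>k<K. exp (- 2 * eta * real k) * 2\<^sup>2 * (real k) ^ 4) * s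
           \<le> 200 * real n * eta powr (-5/2) * s" if K: "K \<ge> 1" for K
  proof -
    define a where "a k = s_coef eta eps A k" for k
    define b where "b k = s_coef eta eps B k" for k
    define na where "na = L2 K a"
    define nb where "nb = L2 K b"
    define S where "S = (\<Sum>k<K. exp (- 2 * eta * real k) * (real k)^4)"
    have S0: "S \<ge> 0" unfolding S_def by (intro sum_nonneg) simp
    have vA: "vnorm (s_vec eta eps K A) = na" unfolding s_vec_def na_def a_def by (simp add: vnorm_vec)
    have vB: "vnorm (s_vec eta eps K B) = nb" unfolding s_vec_def nb_def b_def by (simp add: vnorm_vec)
    have phidiff: "phi eta eps K A - phi eta eps K B = vec K (\<lambda>k. a k / na - b k / nb)"
      unfolding phi_def vA vB by (rule eq_vecI) (auto simp: s_vec_def a_def b_def)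
    have vphi: "vnorm (phi eta eps K A - phi eta eps K B) = L2 K (\<lambda>k. a k / na - b k / nb)"
      unfolding phidiff by (simp add: vnorm_vec)
    have a0: "a 0 = real n"
      unfolding a_def s_coef_def using X by (simp add: X_def[symmetric] mtrace_one)
    have nan: "na \<ge> real n"
    proof -
      have "(a 0)^2 \<le> (\<Sum>k<K. (a k)^2)" by (rule member_le_sum) (use K in auto)
      then have "sqrt ((a 0)^2) \<le> na" unfolding na_def L2_def by (rule real_sqrt_le_mono)
      then show ?thesis using a0 by simp
    qed
    have root: "sqrt (\<Sum>k<K. exp (- 2 * eta * real k) * 2\<^sup>2 * (real k) ^ 4) = 2 * sqrt S"
    proof -
      have "(\<Sum>k<K. exp (- 2 * eta * real k) * 2\<^sup>2 * (real k) ^ 4) = 4 * S"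
        unfolding S_def by (simp add: sum_distrib_left algebra_simps)
      then show ?thesis by (simp add: real_sqrt_mult)
    qed
    have dab: "L2 K (\<lambda>k. a k - b k) \<le> real n * s * sqrt S"
    proof -
      have "(a k - b k)^2 \<le> (real n * s)^2 * (exp (- 2 * eta * real k) * (real k)^4)" for k
      proof -
        have "a k - b k = exp (- eta * real k) * (mtrace (cheb_mat k X) - mtrace (cheb_mat k Y))"
          unfolding a_def b_def s_coef_def X_def Y_def by (simp add: algebra_simps)
        then have "(a k - b k)^2 = exp (- 2 * eta * real k) * (mtrace (cheb_mat k X) - mtrace (cheb_mat k Y))^2"
          by (simp add: power_mult_distrib power2_eq_square exp_add[symmetric])
        also have "\<dots> \<le> exp (- 2 * eta * real k) * (real n * (real k)^2 * s)^2"
        proof -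
          have Bn: "real n * (real k)^2 * s \<ge> 0" using s0 by simp
          have "(mtrace (cheb_mat k X) - mtrace (cheb_mat k Y))^2 \<le> (real n * (real k)^2 * s)^2"
            using abs_le_square_iff[of "mtrace (cheb_mat k X) - mtrace (cheb_mat k Y)" "real n * (real k)^2 * s"]
              lip[of k] Bn by simp
          then show ?thesis by (intro mult_left_mono) auto
        qed
        also have "\<dots> = (real n * s)^2 * (exp (- 2 * eta * real k) * (real k)^4)"
          by (simp add: power_mult_distrib power2_eq_square algebra_simps eval_nat_numeral)
        finally show ?thesis .
      qed
      then have "(\<Sum>k<K. (a k - b k)^2) \<le> (\<Sum>k<K. (real n * s)^2 * (exp (- 2 * eta * real k) * (real k)^4))"
        by (intro sum_mono)
      also have "\<dots> = (real n * s)^2 * S" unfolding S_def by (simp add: sum_distrib_left)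
      finally have "L2 K (\<lambda>k. a k - b k) \<le> sqrt ((real n * s)^2 * S)"
        unfolding L2_def by (rule real_sqrt_le_mono)
      also have "\<dots> = real n * s * sqrt S" using s0 by (simp add: real_sqrt_mult)
      finally show ?thesis .
    qed
    show ?thesis
    proof (cases "n = 0")
      case True
      have "a k = 0" "b k = 0" for k
        unfolding a_def b_def s_coef_def using X Y True
        by (simp_all add: X_def[symmetric] Y_def[symmetric] mtrace_zero_dim cheb_mat_carrier)
      then have "L2 K (\<lambda>k. a k / na - b k / nb) = 0" unfolding L2_def by simp
      then show ?thesis unfolding vphi vA using True by simp
    next
      case False
      then have nap: "na > 0" using nan by linarith
      have "L2 K (\<lambda>k. a k / na - b k / nb) \<le> 2 * L2 K (\<lambda>k. a k - b k) / na"
        using unit_diff[of K a b] nap by (simp add: na_def nb_def)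
      also have "\<dots> \<le> 2 * (real n * s * sqrt S) / na"
        using dab nap by (intro divide_right_mono) auto
      also have "\<dots> = real n / na * (2 * sqrt S) * s" by (simp add: field_simps)
      finally have A1: "vnorm (phi eta eps K A - phi eta eps K B) \<le> real n / na * (2 * sqrt S) * s"
        unfolding vphi .
      have le1: "real n / na \<le> 1" using nan nap by simp
      have "2 * sqrt S \<le> 2 * sqrt (6250 / eta^5)"
        using exp_sum_bound[OF eta, of K] by (simp add: S_def)
      also have "sqrt (6250 / eta^5) = sqrt 6250 * sqrt (1 / eta^5)"
        by (simp add: real_sqrt_mult[symmetric])
      also have "sqrt (1 / eta^5) = eta powr (-5/2)" using powr_52[OF eta] by simp
      also have "sqrt (6250::real) \<le> 100" by (rule real_le_lsqrt) auto
      then have "2 * (sqrt 6250 * eta powr (-5/2)) \<le> 200 * eta powr (-5/2)" using mult_right_mono[of "sqrt 6250" 100 "eta powr (-5/2)"] by (simp add: mult.commute)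
      finally have B1: "2 * sqrt S \<le> 200 * eta powr (-5/2)" by simp
      have "real n / na * (2 * sqrt S) * s \<le> 1 * (200 * eta powr (-5/2)) * s"
      proof -
        have "real n / na * (2 * sqrt S) \<le> 1 * (200 * eta powr (-5/2))"
          by (rule mult_mono[OF le1 B1]) (use S0 in auto)
        then show ?thesis using s0 by (rule mult_right_mono)
      qed
      also have "\<dots> \<le> real n * (200 * eta powr (-5/2)) * s"
        using False s0 by (intro mult_right_mono) auto
      finally have A2: "real n / na * (2 * sqrt S) * s \<le> 200 * real n * eta powr (-5/2) * s"
        by (simp add: algebra_simps)
      show ?thesis unfolding vA root using A1 A2 by simp
    qed
  qed
  show ?thesis using P1 P2 unfolding s_def X_def Y_def by blast
qed


theorem theorem3:
  shows "\<exists>C_T \<le> (2::real). \<exists>c > (0::real).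
    \<forall>(n::nat) (A::real mat) (B::real mat) (eta::real) (eps::real).
      real_sym n A \<and> real_sym n B \<and> eps > 0 \<and> eta > 0
      \<and> spec (normalize_mat eps A) \<subseteq> {-1..1} \<and> spec (normalize_mat eps B) \<subseteq> {-1..1}
      \<longrightarrow>
      (\<forall>k::nat.
         \<bar>mtrace (cheb_mat k (normalize_mat eps A)) - mtrace (cheb_mat k (normalize_mat eps B))\<bar>
           \<le> real n * C_T * (real k)\<^sup>2 * spec_norm (normalize_mat eps A - normalize_mat eps B))
      \<and>
      (\<forall>K::nat. K \<ge> 1 \<longrightarrow>
         vnorm (phi eta eps K A - phi eta eps K B)
           \<le> real n / vnorm (s_vec eta eps K A)
             * sqrt (\<Sum>k<K. exp (- 2 * eta * real k) * C_T\<^sup>2 * (real k) ^ 4)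
             * spec_norm (normalize_mat eps A - normalize_mat eps B)
         \<and>
         real n / vnorm (s_vec eta eps K A)
             * sqrt (\<Sum>k<K. exp (- 2 * eta * real k) * C_T\<^sup>2 * (real k) ^ 4)
             * spec_norm (normalize_mat eps A - normalize_mat eps B)
           \<le> c * real n * eta powr (-5/2) * spec_norm (normalize_mat eps A - normalize_mat eps B))"
proof -
  show ?thesis
    apply (rule exI[of _ "2::real"], rule conjI, simp)
    apply (rule exI[of _ "200::real"], rule conjI, simp)
    using main_bound by blast
qed

end
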